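(* Let $(X_k)_{k\ge0}$ be a random walk with $X_0=0$, $\mathbb{P}[X_{k+1}=X_k+1]=q$ and $\mathbb{P}[X_{k+1}=X_k-1]=p$, where $p+q=1$ and $q<p$. Let $\nu=\inf\{i\ge0: X_i=-1\}$ and for $n\ge0$ let $$u_n(X)=\sum_{i=1}^{\nu}\mathbf 1_{(X_i<n)\wedge(X_i<X_{i-1})},\qquad v_n(X)=\sum_{i=1}^{\nu}X_i\,\mathbf 1_{(X_i<n)\wedge(X_i<X_{i-1})}.$$ Then $$\mathbb{E}[u_n(X)]=\frac{p}{p-q}\Bigl(1-\Bigl(\frac qp\Bigr)^{n+1}\Bigr),\qquad \mathbb{E}[v_n(X)]=\frac{p}{(p-q)^2}\Bigl(2q-p-\bigl(q+n(p-q)\bigr)\Bigl(\frac qp\Bigr)^{n+1}\Bigr).$$ *)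

theory Defs
  imports "HOL-Probability.Probability"
begin

text \<open>Canonical model: the sample space is the set of boolean sequences
  (True = up-step, False = down-step), with the infinite product of
  Bernoulli(q) measures.\<close>

definition rw_space :: "real \<Rightarrow> (nat \<Rightarrow> bool) measure" where
  "rw_space q = PiM UNIV (\<lambda>_. measure_pmf (bernoulli_pmf q))"

definition walk :: "(nat \<Rightarrow> bool) \<Rightarrow> nat \<Rightarrow> int" where
  "walk \<omega> k = (\<Sum>j<k. if \<omega> j then 1 else -1)"

text \<open>nu = inf {i >= 0. X_i = -1}; on the (null) event that -1 is never hit
  we use the convention nu = 0.\<close>
definition hit_time :: "(nat \<Rightarrow> bool) \<Rightarrow> nat" where
  "hit_time \<omega> = (if \<exists>i. walk \<omega> i = -1 then (LEAST i. walk \<omega> i = -1) else 0)"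

definition u_fun :: "nat \<Rightarrow> (nat \<Rightarrow> bool) \<Rightarrow> real" where
  "u_fun n \<omega> = (\<Sum>i\<in>{1..hit_time \<omega>}.
      if walk \<omega> i < int n \<and> walk \<omega> i < walk \<omega> (i - 1) then 1 else 0)"

definition v_fun :: "nat \<Rightarrow> (nat \<Rightarrow> bool) \<Rightarrow> real" where
  "v_fun n \<omega> = (\<Sum>i\<in>{1..hit_time \<omega>}.
      if walk \<omega> i < int n \<and> walk \<omega> i < walk \<omega> (i - 1)
      then real_of_int (walk \<omega> i) else 0)"

end

theory Submission
  imports Defs
begin



lemma comp_meas[measurable]: "(\<lambda>\<omega>. \<omega> i) \<in> measurable (rw_space q) (count_space UNIV)"
  unfolding rw_space_def by measurable

lemma walk_Suc: "walk \<omega> (Suc k) = walk \<omega> k + (if \<omega> k then 1 else -1)"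
  unfolding walk_def by simp

lemma walk_meas[measurable]: "(\<lambda>\<omega>. walk \<omega> k) \<in> measurable (rw_space q) (count_space UNIV)"
proof (induction k)
  case 0 then show ?case by (simp add: walk_def)
next
  case (Suc k)
  have "(\<lambda>\<omega>. (\<lambda>x \<omega>. x + (if \<omega> k then 1 else -1)) (walk \<omega> k) \<omega>) \<in> measurable (rw_space q) (count_space UNIV)"
    by (rule measurable_compose_countable'[OF _ Suc]) auto
  then show ?case by (simp add: walk_Suc)
qed

lemma pred_walk2[measurable]: "Measurable.pred (rw_space q) (\<lambda>\<omega>. R (walk \<omega> i) (walk \<omega> j))"
proof -
  have "(\<lambda>\<omega>. (\<lambda>x \<omega>. R x (walk \<omega> j)) (walk \<omega> i) \<omega>) \<in> measurable (rw_space q) (count_space UNIV)"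
    by (rule measurable_compose_countable'[OF _ walk_meas], rule measurable_compose_countable'[OF _ walk_meas]) auto
  then show ?thesis by simp
qed

lemma pred_walk1[measurable]: "Measurable.pred (rw_space q) (\<lambda>\<omega>. R (walk \<omega> i))"
  using pred_walk2[where R="\<lambda>x y. R x" and j=i] by simp

lemma hit_meas[measurable]: "hit_time \<in> measurable (rw_space q) (count_space UNIV)"
  unfolding hit_time_def by measurable

lemma u_meas[measurable]: "u_fun n \<in> borel_measurable (rw_space q)"
proof -
  have "(\<lambda>\<omega>. (\<lambda>T \<omega>. (\<Sum>i\<in>{1..T}.
      if walk \<omega> i < int n \<and> walk \<omega> i < walk \<omega> (i - 1) then 1 else 0::real)) (hit_time \<omega>) \<omega>) \<in> borel_measurable (rw_space q)"
    by (rule measurable_compose_countable'[OF _ hit_meas]) measurable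
  then show ?thesis unfolding u_fun_def by simp
qed

lemma v_meas[measurable]: "v_fun n \<in> borel_measurable (rw_space q)"
proof -
  have "(\<lambda>\<omega>. (\<lambda>T \<omega>. (\<Sum>i\<in>{1..T}.
      if walk \<omega> i < int n \<and> walk \<omega> i < walk \<omega> (i - 1) then real_of_int (walk \<omega> i) else 0)) (hit_time \<omega>) \<omega>) \<in> borel_measurable (rw_space q)"
    by (rule measurable_compose_countable'[OF _ hit_meas]) measurable
  then show ?thesis unfolding v_fun_def by simp
qed

lemma shift_nn:
  fixes f :: "(nat \<Rightarrow> bool) \<Rightarrow> ennreal"
  assumes q: "0 \<le> q" "q \<le> 1" and f[measurable]: "f \<in> borel_measurable (rw_space q)"
  shows "(\<integral>\<^sup>+\<omega>. f \<omega> \<partial>rw_space q) = (\<integral>\<^sup>+\<omega>. f (case_nat True \<omega>) \<partial>rw_space q) * q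
     + (\<integral>\<^sup>+\<omega>. f (case_nat False \<omega>) \<partial>rw_space q) * (1 - q)"
proof -
  let ?M = "measure_pmf (bernoulli_pmf q)"
  interpret sequence_space ?M
    by (simp add: sequence_space_def product_prob_space_def product_sigma_finite_def
        product_prob_space_axioms_def prob_space_measure_pmf prob_space_imp_sigma_finite)
  have S: "rw_space q = S" by (simp add: rw_space_def)
  have fS[measurable]: "f \<in> borel_measurable S" using f S by simp
  have "(\<integral>\<^sup>+\<omega>. f \<omega> \<partial>S) = (\<integral>\<^sup>+\<omega>. f \<omega> \<partial>distr (?M \<Otimes>\<^sub>M S) S (\<lambda>(s, \<omega>). case_nat s \<omega>))"
    by (simp add: PiM_iter)
  also have "\<dots> = (\<integral>\<^sup>+x. f (case_prod case_nat x) \<partial>(?M \<Otimes>\<^sub>M S))"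
    by (subst nn_integral_distr) (auto simp: split_beta')
  also have "\<dots> = (\<integral>\<^sup>+s. \<integral>\<^sup>+\<omega>. f (case_nat s \<omega>) \<partial>S \<partial>?M)"
    by (subst P.nn_integral_fst[symmetric]) auto
  also have "\<dots> = (\<integral>\<^sup>+\<omega>. f (case_nat True \<omega>) \<partial>S) * q
     + (\<integral>\<^sup>+\<omega>. f (case_nat False \<omega>) \<partial>S) * (1 - q)"
    using q by simp
  finally show ?thesis using S by simp
qed


lemma rw_prob: "prob_space (rw_space q)"
  unfolding rw_space_def by (rule prob_space_PiM) (rule prob_space_measure_pmf)

lemma cn_meas[measurable]: "(\<lambda>\<omega>. case_nat b \<omega>) \<in> measurable (rw_space q) (rw_space q)"
  unfolding rw_space_def by measurable

lemma bounded_integrable: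
  fixes f :: "(nat \<Rightarrow> bool) \<Rightarrow> real"
  assumes "f \<in> borel_measurable (rw_space q)" "\<And>\<omega>. 0 \<le> f \<omega>" "\<And>\<omega>. f \<omega> \<le> B"
  shows "integrable (rw_space q) f"
proof -
  interpret prob_space "rw_space q" by (rule rw_prob)
  show ?thesis
  proof (rule integrable_const_bound[where B=B])
    show "AE x in rw_space q. norm (f x) \<le> B" using assms by (intro AE_I2) (simp add: abs_of_nonneg)
  qed (use assms in simp)
qed

lemma shift_int:
  fixes f :: "(nat \<Rightarrow> bool) \<Rightarrow> real"
  assumes q: "0 \<le> q" "q \<le> 1" and f[measurable]: "f \<in> borel_measurable (rw_space q)"
    and nn: "\<And>\<omega>. 0 \<le> f \<omega>" and bd: "\<And>\<omega>. f \<omega> \<le> B"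
  shows "integral\<^sup>L (rw_space q) f = q * (\<integral>\<omega>. f (case_nat True \<omega>) \<partial>rw_space q)
     + (1 - q) * (\<integral>\<omega>. f (case_nat False \<omega>) \<partial>rw_space q)"
proof -
  have mT[measurable]: "(\<lambda>\<omega>. f (case_nat b \<omega>)) \<in> borel_measurable (rw_space q)" for b
    by measurable
  have iT: "integrable (rw_space q) (\<lambda>\<omega>. f (case_nat b \<omega>))" for b
    by (rule bounded_integrable[where B=B]) (use nn bd in auto)
  have i: "integrable (rw_space q) f"
    by (rule bounded_integrable[where B=B]) (use nn bd in auto)
  have eq: "(\<integral>\<^sup>+\<omega>. ennreal (g \<omega>) \<partial>rw_space q) = ennreal (integral\<^sup>L (rw_space q) g)"
    if "integrable (rw_space q) g" "\<And>\<omega>. 0 \<le> g \<omega>" for g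
    by (rule nn_integral_eq_integral) (use that in auto)
  have "ennreal (integral\<^sup>L (rw_space q) f) = (\<integral>\<^sup>+\<omega>. ennreal (f \<omega>) \<partial>rw_space q)"
    using eq[OF i] nn by simp
  also have "\<dots> = (\<integral>\<^sup>+\<omega>. ennreal (f (case_nat True \<omega>)) \<partial>rw_space q) * q
     + (\<integral>\<^sup>+\<omega>. ennreal (f (case_nat False \<omega>)) \<partial>rw_space q) * (1 - q)"
    by (rule shift_nn[OF q]) measurable
  also have "\<dots> = ennreal (integral\<^sup>L (rw_space q) (\<lambda>\<omega>. f (case_nat True \<omega>))) * ennreal q
     + ennreal (integral\<^sup>L (rw_space q) (\<lambda>\<omega>. f (case_nat False \<omega>))) * ennreal (1 - q)"
    using eq[OF iT] nn by simp
  also have "\<dots> = ennreal ((\<integral>\<omega>. f (case_nat True \<omega>) \<partial>rw_space q) * q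
     + (\<integral>\<omega>. f (case_nat False \<omega>) \<partial>rw_space q) * (1 - q))"
  proof -
    have X: "0 \<le> (\<integral>\<omega>. f (case_nat b \<omega>) \<partial>rw_space q)" for b
      by (rule integral_nonneg_AE) (use nn in simp)
    show ?thesis using X[of True] X[of False] q
      by (simp add: ennreal_plus ennreal_mult)
  qed
  finally have "integral\<^sup>L (rw_space q) f = (\<integral>\<omega>. f (case_nat True \<omega>) \<partial>rw_space q) * q
     + (\<integral>\<omega>. f (case_nat False \<omega>) \<partial>rw_space q) * (1 - q)"
  proof (subst (asm) ennreal_inj)
    show "0 \<le> integral\<^sup>L (rw_space q) f" by (rule integral_nonneg_AE) (use nn in simp)
    show "0 \<le> (\<integral>\<omega>. f (case_nat True \<omega>) \<partial>rw_space q) * q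
     + (\<integral>\<omega>. f (case_nat False \<omega>) \<partial>rw_space q) * (1 - q)"
      using q nn by (intro add_nonneg_nonneg mult_nonneg_nonneg integral_nonneg_AE) auto
  qed
  then show ?thesis by (simp add: mult.commute)
qed

definition Sn :: "int \<Rightarrow> nat \<Rightarrow> int \<Rightarrow> (nat \<Rightarrow> bool) \<Rightarrow> real" where
  "Sn L N a \<omega> = (\<Sum>i\<in>{1..N}. if (\<forall>k<i. a + walk \<omega> k \<noteq> -1) \<and> \<not> \<omega> (i - 1) \<and> a + walk \<omega> i < L then 1 else 0)"

definition Sv :: "nat \<Rightarrow> int \<Rightarrow> (nat \<Rightarrow> bool) \<Rightarrow> real" where
  "Sv N a \<omega> = (if \<forall>k\<le>N. a + walk \<omega> k \<noteq> -1 then 1 else 0)"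

lemma Sn_meas[measurable]: "Sn L N a \<in> borel_measurable (rw_space q)"
  unfolding Sn_def by measurable

lemma Sv_meas[measurable]: "Sv N a \<in> borel_measurable (rw_space q)"
  unfolding Sv_def by measurable

lemma walk_0[simp]: "walk \<omega> 0 = 0" by (simp add: walk_def)

lemma walk_cn: "walk (case_nat b \<omega>) (Suc k) = (if b then 1 else -1) + walk \<omega> k"
  unfolding walk_def sum.lessThan_Suc_shift by simp

lemma all_less_Suc': "(\<forall>k<Suc i. P k) = (P 0 \<and> (\<forall>k<i. P (Suc k)))"
  by (auto simp: less_Suc_eq_0_disj)

lemma all_le_Suc': "(\<forall>k\<le>Suc i. P k) = (P 0 \<and> (\<forall>k\<le>i. P (Suc k)))"
proof
  assume H: "\<forall>k\<le>Suc i. P k" show "P 0 \<and> (\<forall>k\<le>i. P (Suc k))" using H by auto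
next
  assume H: "P 0 \<and> (\<forall>k\<le>i. P (Suc k))"
  show "\<forall>k\<le>Suc i. P k"
  proof (intro allI impI)
    fix k assume "k \<le> Suc i" then show "P k" using H by (cases k) auto
  qed
qed

lemma Sn_nonneg: "0 \<le> Sn L N a \<omega>"
  unfolding Sn_def by (rule sum_nonneg) auto

lemma Sn_le: "Sn L N a \<omega> \<le> real N"
proof -
  have "Sn L N a \<omega> \<le> (\<Sum>i\<in>{1..N}. 1)" unfolding Sn_def by (rule sum_mono) auto
  then show ?thesis by simp
qed

lemma Sn_zero[simp]: "Sn L 0 a \<omega> = 0" by (simp add: Sn_def)

lemma Sn_m1[simp]: "Sn L N (-1) \<omega> = 0"
  unfolding Sn_def
proof (intro sum.neutral ballI)
  fix i :: nat assume "i \<in> {1..N}"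
  then have "\<not> (\<forall>k<i. -1 + walk \<omega> k \<noteq> -1)" by (auto intro!: exI[of _ 0])
  then show "(if (\<forall>k<i. -1 + walk \<omega> k \<noteq> -1) \<and> \<not> \<omega> (i - 1) \<and> -1 + walk \<omega> i < L then 1 else 0) = (0::real)"
    by simp
qed

lemma Sn_Suc: "Sn L (Suc N) a (case_nat b \<omega>) =
  (if a = -1 then 0 else (if \<not> b \<and> a - 1 < L then 1 else 0) + Sn L N (a + (if b then 1 else -1)) \<omega>)"
proof (cases "a = -1")
  case True then show ?thesis by simp
next
  case False
  have "Sn L (Suc N) a (case_nat b \<omega>) = (\<Sum>i\<in>{Suc 0..Suc N}. if (\<forall>k<i. a + walk (case_nat b \<omega>) k \<noteq> -1) \<and> \<not> case_nat b \<omega> (i - 1) \<and> a + walk (case_nat b \<omega>) i < L then 1 else 0)"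
    by (simp add: Sn_def)
  also have "\<dots> = (\<Sum>i\<in>{0..N}. if (\<forall>k<Suc i. a + walk (case_nat b \<omega>) k \<noteq> -1) \<and> \<not> case_nat b \<omega> i \<and> a + walk (case_nat b \<omega>) (Suc i) < L then 1 else 0)"
    by (subst sum.atLeast_Suc_atMost_Suc_shift) simp
  also have "\<dots> = (if \<not> b \<and> a - 1 < L then 1 else 0) + (\<Sum>i\<in>{Suc 0..N}. if (\<forall>k<Suc i. a + walk (case_nat b \<omega>) k \<noteq> -1) \<and> \<not> case_nat b \<omega> i \<and> a + walk (case_nat b \<omega>) (Suc i) < L then 1 else 0)"
    using False by (subst sum.atLeast_Suc_atMost) (auto simp: walk_cn)
  also have "(\<Sum>i\<in>{Suc 0..N}. if (\<forall>k<Suc i. a + walk (case_nat b \<omega>) k \<noteq> -1) \<and> \<not> case_nat b \<omega> i \<and> a + walk (case_nat b \<omega>) (Suc i) < L then 1 else 0)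
     = Sn L N (a + (if b then 1 else -1)) \<omega>"
    unfolding Sn_def
  proof (rule sum.cong)
    show "{Suc 0..N} = {1..N}" by simp
  next
    fix i assume i: "i \<in> {1..N}"
    then obtain j where j: "i = Suc j" by (cases i) auto
    show "(if (\<forall>k<Suc i. a + walk (case_nat b \<omega>) k \<noteq> -1) \<and> \<not> case_nat b \<omega> i \<and> a + walk (case_nat b \<omega>) (Suc i) < L then 1 else 0)
      = (if (\<forall>k<i. a + (if b then 1 else -1) + walk \<omega> k \<noteq> -1) \<and> \<not> \<omega> (i - 1) \<and> a + (if b then 1 else -1) + walk \<omega> i < L then 1 else (0::real))"
      using False unfolding all_less_Suc' by (simp add: walk_cn j add.assoc)
  qed
  finally show ?thesis using False by simp
qed

lemma Sv_0: "Sv 0 a \<omega> = (if a = -1 then 0 else 1)" by (simp add: Sv_def)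

lemma Sv_m1[simp]: "Sv N (-1) \<omega> = 0" by (auto simp: Sv_def)

lemma Sv_Suc: "Sv (Suc N) a (case_nat b \<omega>) = (if a = -1 then 0 else Sv N (a + (if b then 1 else -1)) \<omega>)"
  unfolding Sv_def all_le_Suc' by (simp add: walk_cn add.assoc)

lemma Sv_bounds: "0 \<le> Sv N a \<omega>" "Sv N a \<omega> \<le> 1" by (auto simp: Sv_def)



lemma homog_zero:
  fixes D :: "nat \<Rightarrow> real"
  assumes q: "0 \<le> q" "q < 1 - q" and D0: "D 0 = 0" and Dnn: "\<And>b. 0 \<le> D b"
    and DK: "\<And>b. D b \<le> K"
    and Drec: "\<And>b. D (Suc b) = q * D (Suc (Suc b)) + (1 - q) * D b"
  shows "D 1 = 0"
proof (cases "q = 0")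
  case True
  then show ?thesis using Drec[of 0] D0 by simp
next
  case False
  then have qp: "0 < q" using q by simp
  have step: "D (Suc b) - D b \<ge> D 1" for b
  proof (induction b)
    case 0 then show ?case using D0 by simp
  next
    case (Suc b)
    have e: "q * (D (Suc (Suc b)) - D (Suc b)) = (1 - q) * (D (Suc b) - D b)"
      using Drec[of b] by (simp add: algebra_simps)
    have "D 1 \<ge> 0" using Dnn by simp
    then have "q * (D (Suc b) - D b) \<le> (1 - q) * (D (Suc b) - D b)"
      using Suc q by (intro mult_right_mono) auto
    then have "q * (D (Suc b) - D b) \<le> q * (D (Suc (Suc b)) - D (Suc b))" using e by simp
    then have "D (Suc b) - D b \<le> D (Suc (Suc b)) - D (Suc b)" using qp by simp
    then show ?case using Suc by simp
  qed
  have lin: "D b \<ge> real b * D 1" for b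
  proof (induction b)
    case 0 then show ?case using D0 by simp
  next
    case (Suc b) then show ?case using step[of b] by (simp add: algebra_simps)
  qed
  show ?thesis
  proof (rule ccontr)
    assume "D 1 \<noteq> 0"
    then have "D 1 > 0" using Dnn[of 1] by simp
    then obtain b where "K < real b * D 1" using ex_less_of_nat_mult by blast
    then show False using lin[of b] DK[of b] by simp
  qed
qed

lemma conv_lemma:
  fixes E :: "nat \<Rightarrow> nat \<Rightarrow> real" and g C :: "nat \<Rightarrow> real"
  assumes q: "0 \<le> q" "q < 1 - q" and g0: "\<And>b. 0 \<le> g b"
    and E0: "\<And>b. E 0 b = 0" and EN0: "\<And>N. E N 0 = 0"
    and Erec: "\<And>N b. E (Suc N) (Suc b) = q * E N (Suc (Suc b)) + (1 - q) * (g b + E N b)"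
    and C0: "C 0 = 0" and Cnn: "\<And>b. 0 \<le> C b" and CK: "\<And>b. C b \<le> K"
    and Crec: "\<And>b. C (Suc b) = q * C (Suc (Suc b)) + (1 - q) * (g b + C b)"
  shows "(\<lambda>N. E N 1) \<longlonglongrightarrow> C 1"
proof -
  have le: "\<forall>b. E N b \<le> C b" for N
  proof (induction N)
    case 0 then show ?case using E0 Cnn by simp
  next
    case (Suc N)
    show ?case
    proof
      fix b show "E (Suc N) b \<le> C b"
      proof (cases b)
        case 0 then show ?thesis using EN0 C0 by simp
      next
        case (Suc b')
        have "q * E N (Suc (Suc b')) \<le> q * C (Suc (Suc b'))"
          using Suc.IH q by (intro mult_left_mono) auto
        moreover have "(1 - q) * (g b' + E N b') \<le> (1 - q) * (g b' + C b')"
          using Suc.IH q by (intro mult_left_mono) auto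
        ultimately show ?thesis using Erec[of N b'] Crec[of b'] Suc by simp
      qed
    qed
  qed
  have mono: "\<forall>b. E N b \<le> E (Suc N) b" for N
  proof (induction N)
    case 0 show ?case
    proof
      fix b show "E 0 b \<le> E (Suc 0) b"
        using q g0 by (cases b) (auto simp: E0 EN0 Erec)
    qed
  next
    case (Suc N)
    show ?case
    proof
      fix b show "E (Suc N) b \<le> E (Suc (Suc N)) b"
      proof (cases b)
        case 0 then show ?thesis using EN0 by simp
      next
        case (Suc b')
        have "q * E N (Suc (Suc b')) \<le> q * E (Suc N) (Suc (Suc b'))"
          using Suc.IH q by (intro mult_left_mono) auto
        moreover have "(1 - q) * (g b' + E N b') \<le> (1 - q) * (g b' + E (Suc N) b')"
          using Suc.IH q by (intro mult_left_mono) auto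
        ultimately show ?thesis using Erec[of N b'] Erec[of "Suc N" b'] Suc by simp
      qed
    qed
  qed
  define L where "L b = (SUP N. E N b)" for b
  have lim: "(\<lambda>N. E N b) \<longlonglongrightarrow> L b" for b
    unfolding L_def
  proof (rule LIMSEQ_incseq_SUP)
    show "bdd_above (range (\<lambda>N. E N b))"
      by (rule bdd_aboveI[where M="C b"]) (use le in blast)
    show "incseq (\<lambda>N. E N b)"
      by (rule incseq_SucI) (use mono in blast)
  qed
  have LC: "L b \<le> C b" for b
    by (rule LIMSEQ_le_const2[OF lim]) (use le in blast)
  have Lnn: "0 \<le> L b" for b
  proof (rule LIMSEQ_le_const[OF lim], rule exI[of _ 0], intro allI impI)
    fix N show "0 \<le> E N b"
    proof (induction N)
      case 0 then show ?case by (simp add: E0)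
    next
      case (Suc N) then show ?case using mono by (meson order_trans)
    qed
  qed
  have L0: "L 0 = 0"
    using lim[of 0] by (simp add: EN0 LIMSEQ_const_iff)
  have Lrec: "L (Suc b) = q * L (Suc (Suc b)) + (1 - q) * (g b + L b)" for b
  proof -
    have "(\<lambda>N. E (Suc N) (Suc b)) \<longlonglongrightarrow> L (Suc b)" using lim LIMSEQ_Suc by blast
    moreover have "(\<lambda>N. E (Suc N) (Suc b)) \<longlonglongrightarrow> q * L (Suc (Suc b)) + (1 - q) * (g b + L b)"
      unfolding Erec by (intro tendsto_intros lim)
    ultimately show ?thesis using LIMSEQ_unique by blast
  qed
  have "C 1 - L 1 = 0"
  proof (rule homog_zero[OF q, where D="\<lambda>b. C b - L b" and K=K])
    show "C 0 - L 0 = 0" using C0 L0 by simp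
    show "0 \<le> C b - L b" for b using LC[of b] by simp
    show "C b - L b \<le> K" for b using CK[of b] Lnn[of b] by simp
    show "C (Suc b) - L (Suc b) = q * (C (Suc (Suc b)) - L (Suc (Suc b))) + (1 - q) * (C b - L b)" for b
      unfolding Crec[of b] Lrec[of b] by (simp add: algebra_simps)
  qed
  then show ?thesis using lim[of 1] by simp
qed

lemma surv_lemma:
  fixes P :: "nat \<Rightarrow> nat \<Rightarrow> real"
  assumes q: "0 \<le> q" "q < 1 - q"
    and P0: "\<And>b. P 0 b = (if b = 0 then 0 else 1)" and PN0: "\<And>N. P N 0 = 0"
    and Prec: "\<And>N b. P (Suc N) (Suc b) = q * P N (Suc (Suc b)) + (1 - q) * P N b"
  shows "(\<lambda>N. P N 1) \<longlonglongrightarrow> 0"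
proof -
  have bnd: "\<forall>b. 0 \<le> P N b \<and> P N b \<le> 1" for N
  proof (induction N)
    case 0 then show ?case by (simp add: P0)
  next
    case (Suc N)
    show ?case
    proof
      fix b show "0 \<le> P (Suc N) b \<and> P (Suc N) b \<le> 1"
      proof (cases b)
        case 0 then show ?thesis using PN0 by simp
      next
        case (Suc b')
        have a: "0 \<le> P N (Suc (Suc b'))" "P N (Suc (Suc b')) \<le> 1" "0 \<le> P N b'" "P N b' \<le> 1"
          using Suc.IH by auto
        have "q * P N (Suc (Suc b')) \<le> q" using a q by (intro mult_left_le) auto
        moreover have "(1 - q) * P N b' \<le> 1 - q" using a q by (intro mult_left_le) auto
        moreover have "0 \<le> q * P N (Suc (Suc b'))" "0 \<le> (1 - q) * P N b'" using a q by auto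
        ultimately show ?thesis unfolding Suc Prec[of N b'] by linarith
      qed
    qed
  qed
  have mono: "\<forall>b. P (Suc N) b \<le> P N b" for N
  proof (induction N)
    case 0 show ?case
    proof
      fix b show "P (Suc 0) b \<le> P 0 b"
      proof (cases b)
        case 0 then show ?thesis by (simp add: PN0)
      next
        case (Suc b')
        have "P (Suc 0) b = q * P 0 (Suc (Suc b')) + (1 - q) * P 0 b'" unfolding Suc by (rule Prec)
        also have "\<dots> \<le> q * 1 + (1 - q) * 1"
          using q by (intro add_mono mult_left_mono) (auto simp: P0)
        also have "\<dots> = P 0 b" using Suc by (simp add: P0)
        finally show ?thesis .
      qed
    qed
  next
    case (Suc N)
    show ?case
    proof
      fix b show "P (Suc (Suc N)) b \<le> P (Suc N) b"
      proof (cases b)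
        case 0 then show ?thesis using PN0 by simp
      next
        case (Suc b')
        have "q * P (Suc N) (Suc (Suc b')) \<le> q * P N (Suc (Suc b'))"
          using Suc.IH q by (intro mult_left_mono) auto
        moreover have "(1 - q) * P (Suc N) b' \<le> (1 - q) * P N b'"
          using Suc.IH q by (intro mult_left_mono) auto
        ultimately show ?thesis using Prec[of N b'] Prec[of "Suc N" b'] Suc by simp
      qed
    qed
  qed
  define L where "L b = (INF N. P N b)" for b
  have lim: "(\<lambda>N. P N b) \<longlonglongrightarrow> L b" for b
    unfolding L_def
  proof (rule LIMSEQ_decseq_INF)
    show "bdd_below (range (\<lambda>N. P N b))"
      by (rule bdd_belowI[where m=0]) (use bnd in blast)
    show "decseq (\<lambda>N. P N b)"
      by (rule decseq_SucI) (use mono in blast)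
  qed
  have L1: "L b \<le> 1" for b
    by (rule LIMSEQ_le_const2[OF lim]) (use bnd in blast)
  have Lnn: "0 \<le> L b" for b
    by (rule LIMSEQ_le_const[OF lim]) (use bnd in blast)
  have L0: "L 0 = 0"
    using lim[of 0] by (simp add: PN0 LIMSEQ_const_iff)
  have Lrec: "L (Suc b) = q * L (Suc (Suc b)) + (1 - q) * L b" for b
  proof -
    have "(\<lambda>N. P (Suc N) (Suc b)) \<longlonglongrightarrow> L (Suc b)" using lim LIMSEQ_Suc by blast
    moreover have "(\<lambda>N. P (Suc N) (Suc b)) \<longlonglongrightarrow> q * L (Suc (Suc b)) + (1 - q) * L b"
      unfolding Prec by (intro tendsto_intros lim)
    ultimately show ?thesis using LIMSEQ_unique by blast
  qed
  have "L 1 = 0"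
    by (rule homog_zero[OF q, where D=L and K=1]) (rule L0, rule Lnn, rule L1, rule Lrec)
  then show ?thesis using lim[of 1] by simp
qed



definition Cf :: "real \<Rightarrow> nat \<Rightarrow> nat \<Rightarrow> real" where
  "Cf q n b = (1 - q) / (1 - 2 * q) * real (min b (n + 1))
     - ((1 - q) * q) / (1 - 2 * q)^2 * ((q / (1 - q)) ^ (n + 1 - b) - (q / (1 - q)) ^ (n + 1))"

lemma Cf_facts: fixes q :: real assumes "0 \<le> q" "q < 1 - q"
  shows "(1 - q) * (q / (1 - q)) = q"
    "(1 - q) / (1 - 2 * q) * ((1 - q) - q) = 1 - q"
    "((1 - q) * q) / (1 - 2 * q)^2 * (1 - q / (1 - q)) = (1 - q) / (1 - 2 * q) * (q / (1 - q))"
proof -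
  have p: "1 - q > 0" "1 - 2 * q > 0" using assms by auto
  show "(1 - q) * (q / (1 - q)) = q" using p by simp
  show "(1 - q) / (1 - 2 * q) * ((1 - q) - q) = 1 - q" using p by simp
  have "(1 - 2*q)/(1-q) = ((1-q) - q)/(1-q)" by simp
  also have "\<dots> = (1-q)/(1-q) - q/(1-q)" by (rule diff_divide_distrib)
  also have "\<dots> = 1 - q/(1-q)" using p by simp
  finally have "1 - q / (1 - q) = (1 - 2 * q) / (1 - q)" by simp
  then show "((1 - q) * q) / (1 - 2 * q)^2 * (1 - q / (1 - q)) = (1 - q) / (1 - 2 * q) * (q / (1 - q))"
    using p by (simp add: power2_eq_square)
qed

lemma Cf0: "Cf q n 0 = 0" by (simp add: Cf_def)

lemma Cf1: assumes "0 \<le> q" "q < 1 - q"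
  shows "Cf q n 1 = (1 - q) / ((1 - q) - q) * (1 - (q / (1 - q)) ^ (n + 1))"
proof -
  define r where "r = q / (1 - q)"
  define a where "a = (1 - q) / (1 - 2 * q)"
  define B where "B = ((1 - q) * q) / (1 - 2 * q)^2"
  have f4: "B * (1 - r) = a * r" using Cf_facts(3)[OF assms] unfolding a_def B_def r_def .
  have C: "Cf q n 1 = a - B * (r ^ n - r ^ n * r)" unfolding Cf_def a_def B_def r_def by simp
  have "(1 - q) / ((1 - q) - q) = a" unfolding a_def by simp
  then have "(1 - q) / ((1 - q) - q) * (1 - (q / (1 - q)) ^ (n + 1)) = a * (1 - r ^ n * r)"
    unfolding r_def by simp
  also have "\<dots> = a - B * (r ^ n - r ^ n * r)"
  proof -
    have "B * (r ^ n - r ^ n * r) = r ^ n * (B * (1 - r))" by (simp add: algebra_simps)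
    also have "\<dots> = a * (r ^ n * r)" using f4 by simp
    finally show ?thesis by (simp add: algebra_simps)
  qed
  finally show ?thesis using C by simp
qed

lemma id1: fixes a B R r x p q b :: real shows
 "a*(b+1) - B*(r*x - R) - (q*(a*(b+2) - B*(x-R)) + p*(1 + (a*b - B*(r*(r*x) - R))))
  = -(a*b+a+B*R-B*x*r)*(p+q-1)+(a*(p-q)-p)+(B*x*r-B*x)*(p*r-q)"
  by (simp add: algebra_simps)
lemma id2: fixes a B R r p q n :: real shows
 "a*(n+1) - B*(1-R) - (q*(a*(n+1) - B*(1-R)) + p*(1 + (a*n - B*(r - R))))
  = -(p+q-1)*(a*(n+1)-B*(1-R))-p*(B*(1-r)-a*r)+(a*(p-q)-p)-a*(p*r-q)"
  by (simp add: algebra_simps)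
lemma id3: fixes X p q :: real shows "X - (q * X + p * (0 + X)) = -(p+q-1)*X"
  by (simp add: algebra_simps)

lemma Cf_rec: assumes "0 \<le> q" "q < 1 - q"
  shows "Cf q n (Suc b) = q * Cf q n (Suc (Suc b)) + (1 - q) * ((if b \<le> n then 1 else 0) + Cf q n b)"
proof -
  define r where "r = q / (1 - q)"
  define a where "a = (1 - q) / (1 - 2 * q)"
  define B where "B = ((1 - q) * q) / (1 - 2 * q)^2"
  define R where "R = r ^ (n + 1)"
  have f2: "(1 - q) * r - q = 0" using Cf_facts(1)[OF assms] unfolding r_def by simp
  have f3: "a * ((1 - q) - q) - (1 - q) = 0" using Cf_facts(2)[OF assms] unfolding a_def by simp
  have f4: "B * (1 - r) - a * r = 0" using Cf_facts(3)[OF assms] unfolding a_def B_def r_def by simp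
  have C: "Cf q n c = a * real (min c (n + 1)) - B * (r ^ (n + 1 - c) - R)" for c
    unfolding Cf_def a_def B_def r_def R_def by simp
  consider "Suc b \<le> n" | "b = n" | "n < b" by linarith
  then show ?thesis
  proof cases
    case 1
    then obtain k where n: "n = Suc b + k" using le_Suc_ex by blast
    define x where "x = r ^ k"
    have "n + 1 - Suc b = Suc k" "n + 1 - Suc (Suc b) = k" "n + 1 - b = Suc (Suc k)"
      "min (Suc b) (n+1) = Suc b" "min (Suc (Suc b)) (n+1) = Suc (Suc b)" "min b (n+1) = b"
      using n by auto
    then have c1: "Cf q n (Suc b) = a * (real b + 1) - B * (r * x - R)"
      and c2: "Cf q n (Suc (Suc b)) = a * (real b + 2) - B * (x - R)"
      and c3: "Cf q n b = a * real b - B * (r * (r * x) - R)"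
      unfolding C x_def by simp_all
    have g: "(if b \<le> n then 1 else 0 :: real) = 1" using 1 by simp
    show ?thesis unfolding c1 c2 c3 g
      using id1[of a "real b" B r x R q "1 - q"] f2 f3 by simp
  next
    case 2
    have "n + 1 - Suc b = 0" "n + 1 - Suc (Suc b) = 0" "n + 1 - b = 1"
      "min (Suc b) (n+1) = n + 1" "min (Suc (Suc b)) (n+1) = n + 1" "min b (n+1) = n"
      using 2 by auto
    then have c1: "Cf q n (Suc b) = a * (real n + 1) - B * (1 - R)"
      and c2: "Cf q n (Suc (Suc b)) = a * (real n + 1) - B * (1 - R)"
      and c3: "Cf q n b = a * real n - B * (r - R)"
      unfolding C by simp_all
    have g: "(if b \<le> n then 1 else 0 :: real) = 1" using 2 by simp
    show ?thesis unfolding c1 c2 c3 g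
      using id2[of a "real n" B R q "1 - q" r] f2 f3 f4 by simp
  next
    case 3
    have "n + 1 - Suc b = 0" "n + 1 - Suc (Suc b) = 0" "n + 1 - b = 0"
      "min (Suc b) (n+1) = n + 1" "min (Suc (Suc b)) (n+1) = n + 1" "min b (n+1) = n + 1"
      using 3 by auto
    then have c1: "Cf q n (Suc b) = a * (real n + 1) - B * (1 - R)"
      and c2: "Cf q n (Suc (Suc b)) = a * (real n + 1) - B * (1 - R)"
      and c3: "Cf q n b = a * (real n + 1) - B * (1 - R)"
      unfolding C by simp_all
    have g: "(if b \<le> n then 1 else 0 :: real) = 0" using 3 by simp
    show ?thesis unfolding c1 c2 c3 g
      using id3[of "a * (real n + 1) - B * (1 - R)" q "1 - q"] by simp
  qed
qed


lemma Cf_bounds: assumes "0 \<le> q" "q < 1 - q"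
  shows "0 \<le> Cf q n b" "Cf q n b \<le> (1 - q) / (1 - 2 * q) * real (n + 1)"
proof -
  have p: "1 - q > 0" "1 - 2 * q > 0" using assms by auto
  define r where "r = q / (1 - q)"
  have r: "0 \<le> r" "r \<le> 1" using assms p by (auto simp: r_def)
  define m where "m = min b (n + 1)"
  define j where "j = n + 1 - b"
  have jm: "n + 1 = j + m" "m \<le> n + 1" by (auto simp: m_def j_def)
  define B where "B = ((1 - q) * q) / (1 - 2 * q)^2"
  define a where "a = (1 - q) / (1 - 2 * q)"
  have B: "B \<ge> 0" using p assms by (simp add: B_def)
  have a: "a \<ge> 0" using p by (simp add: a_def)
  have C0: "Cf q n b = a * real m - B * (r ^ j - r ^ (n + 1))"
    unfolding Cf_def B_def r_def m_def a_def j_def by simp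
  have C: "Cf q n b = a * real m - B * (r ^ j - r ^ (j + m))"
    unfolding C0 jm(1) ..
  have d: "r ^ j - r ^ (j + m) = r ^ j * (1 - r ^ m)" by (simp add: power_add algebra_simps)
  have rm: "r ^ m \<le> 1" using r by (simp add: power_le_one)
  have rj: "r ^ j \<le> 1" "0 \<le> r ^ j" using r by (auto simp: power_le_one)
  have bern: "1 - r ^ m \<le> real m * (1 - r)"
  proof -
    have "1 + real m * (r - 1) \<le> r ^ m" using Bernoulli_inequality[of "r - 1" m] r by simp
    moreover have "real m * (r - 1) = - (real m * (1 - r))" by (simp add: algebra_simps)
    ultimately show ?thesis by linarith
  qed
  have "r ^ j * (1 - r ^ m) \<le> 1 * (1 - r ^ m)" using rj rm by (intro mult_right_mono) auto
  then have t: "0 \<le> r ^ j - r ^ (j + m)" "r ^ j - r ^ (j + m) \<le> real m * (1 - r)"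
    using d bern rj rm by (auto intro: mult_nonneg_nonneg)
  have "B * (r ^ j - r ^ (j + m)) \<le> B * (real m * (1 - r))" using t B by (intro mult_left_mono)
  also have "\<dots> = real m * (B * (1 - r))" by simp
  also have "B * (1 - r) = a * r" using Cf_facts(3)[OF assms] unfolding a_def B_def r_def .
  finally have "B * (r ^ j - r ^ (j + m)) \<le> real m * (a * r)" .
  moreover have "real m * (a * r) \<le> a * real m"
  proof -
    have "a * r \<le> a" using mult_left_le[of r a] r a by simp
    then have "real m * (a * r) \<le> real m * a" by (intro mult_left_mono) auto
    then show ?thesis by (simp add: mult.commute)
  qed
  ultimately show "0 \<le> Cf q n b" unfolding C by linarith
  have "0 \<le> B * (r ^ j - r ^ (j + m))" using B t by simp
  moreover have "a * real m \<le> a * real (n + 1)"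
    using jm a by (intro mult_left_mono) auto
  ultimately show "Cf q n b \<le> (1 - q) / (1 - 2 * q) * real (n + 1)" unfolding C a_def by linarith
qed




lemma Sn_int_rec:
  assumes q: "0 \<le> q" "q \<le> 1" and a: "a \<noteq> -1"
  shows "(\<integral>\<omega>. Sn L (Suc N) a \<omega> \<partial>rw_space q) = q * (\<integral>\<omega>. Sn L N (a + 1) \<omega> \<partial>rw_space q)
     + (1 - q) * ((if a - 1 < L then 1 else 0) + (\<integral>\<omega>. Sn L N (a - 1) \<omega> \<partial>rw_space q))"
proof -
  interpret prob_space "rw_space q" by (rule rw_prob)
  have "(\<integral>\<omega>. Sn L (Suc N) a \<omega> \<partial>rw_space q) = q * (\<integral>\<omega>. Sn L (Suc N) a (case_nat True \<omega>) \<partial>rw_space q)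
     + (1 - q) * (\<integral>\<omega>. Sn L (Suc N) a (case_nat False \<omega>) \<partial>rw_space q)"
    by (rule shift_int[OF q, where B="real (Suc N)"]) (auto simp: Sn_nonneg Sn_le simp del: of_nat_Suc)
  also have "(\<lambda>\<omega>. Sn L (Suc N) a (case_nat True \<omega>)) = Sn L N (a + 1)"
    using a by (simp add: Sn_Suc fun_eq_iff)
  also have "(\<lambda>\<omega>. Sn L (Suc N) a (case_nat False \<omega>)) = (\<lambda>\<omega>. (if a - 1 < L then 1 else 0) + Sn L N (a - 1) \<omega>)"
    using a by (simp add: Sn_Suc fun_eq_iff)
  also have "(\<integral>\<omega>. (if a - 1 < L then 1 else 0) + Sn L N (a - 1) \<omega> \<partial>rw_space q)
      = (if a - 1 < L then 1 else 0) + (\<integral>\<omega>. Sn L N (a - 1) \<omega> \<partial>rw_space q)"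
  proof -
    have "(\<integral>\<omega>. (if a - 1 < L then 1 else 0) + Sn L N (a - 1) \<omega> \<partial>rw_space q)
      = (\<integral>\<omega>. (if a - 1 < L then 1 else 0) \<partial>rw_space q) + (\<integral>\<omega>. Sn L N (a - 1) \<omega> \<partial>rw_space q)"
    proof (rule Bochner_Integration.integral_add)
      show "integrable (rw_space q) (Sn L N (a - 1))"
        by (rule bounded_integrable[where B="real N"]) (auto simp: Sn_nonneg Sn_le)
    qed simp
    then show ?thesis by (simp add: prob_space)
  qed
  finally show ?thesis .
qed

lemma Sv_int_rec:
  assumes q: "0 \<le> q" "q \<le> 1" and a: "a \<noteq> -1"
  shows "(\<integral>\<omega>. Sv (Suc N) a \<omega> \<partial>rw_space q) = q * (\<integral>\<omega>. Sv N (a + 1) \<omega> \<partial>rw_space q)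
     + (1 - q) * (\<integral>\<omega>. Sv N (a - 1) \<omega> \<partial>rw_space q)"
proof -
  have "(\<integral>\<omega>. Sv (Suc N) a \<omega> \<partial>rw_space q) = q * (\<integral>\<omega>. Sv (Suc N) a (case_nat True \<omega>) \<partial>rw_space q)
     + (1 - q) * (\<integral>\<omega>. Sv (Suc N) a (case_nat False \<omega>) \<partial>rw_space q)"
    by (rule shift_int[OF q, where B=1]) (auto simp: Sv_bounds)
  also have "(\<lambda>\<omega>. Sv (Suc N) a (case_nat True \<omega>)) = Sv N (a + 1)"
    using a by (simp add: Sv_Suc fun_eq_iff)
  also have "(\<lambda>\<omega>. Sv (Suc N) a (case_nat False \<omega>)) = Sv N (a - 1)"
    using a by (simp add: Sv_Suc fun_eq_iff)
  finally show ?thesis .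
qed

lemma Sn_lim:
  assumes q: "0 \<le> q" "q < 1 - q"
  shows "(\<lambda>N. \<integral>\<omega>. Sn (int n) N 0 \<omega> \<partial>rw_space q) \<longlonglongrightarrow> Cf q n 1"
proof -
  define E where "E N b = (\<integral>\<omega>. Sn (int n) N (int b - 1) \<omega> \<partial>rw_space q)" for N b
  have "(\<lambda>N. E N 1) \<longlonglongrightarrow> Cf q n 1"
  proof (rule conv_lemma[OF q, where g="\<lambda>b. if b \<le> n then 1 else 0" and K="(1 - q) / (1 - 2 * q) * real (n + 1)"])
    show "E 0 b = 0" for b by (simp add: E_def)
    show "E N 0 = 0" for N by (simp add: E_def)
    show "E (Suc N) (Suc b) = q * E N (Suc (Suc b)) + (1 - q) * ((if b \<le> n then 1 else 0) + E N b)" for N b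
    proof -
      have "E (Suc N) (Suc b) = (\<integral>\<omega>. Sn (int n) (Suc N) (int b) \<omega> \<partial>rw_space q)" by (simp add: E_def)
      also have "\<dots> = q * (\<integral>\<omega>. Sn (int n) N (int b + 1) \<omega> \<partial>rw_space q)
        + (1 - q) * ((if int b - 1 < int n then 1 else 0) + (\<integral>\<omega>. Sn (int n) N (int b - 1) \<omega> \<partial>rw_space q))"
        by (rule Sn_int_rec) (use q in auto)
      also have "\<dots> = q * E N (Suc (Suc b)) + (1 - q) * ((if b \<le> n then 1 else 0) + E N b)"
        by (simp add: E_def add.commute)
      finally show ?thesis .
    qed
    show "Cf q n (Suc b) = q * Cf q n (Suc (Suc b)) + (1 - q) * ((if b \<le> n then 1 else 0) + Cf q n b)" for b
      by (rule Cf_rec[OF q])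
    show "0 \<le> Cf q n b" for b by (rule Cf_bounds(1)[OF q])
    show "Cf q n b \<le> (1 - q) / (1 - 2 * q) * real (n + 1)" for b by (rule Cf_bounds(2)[OF q])
    show "Cf q n 0 = 0" by (rule Cf0)
    show "0 \<le> (if b \<le> n then 1 else 0 :: real)" for b by simp
  qed
  then show ?thesis by (simp add: E_def)
qed

lemma Sv_lim:
  assumes q: "0 \<le> q" "q < 1 - q"
  shows "(\<lambda>N. \<integral>\<omega>. Sv N 0 \<omega> \<partial>rw_space q) \<longlonglongrightarrow> 0"
proof -
  interpret prob_space "rw_space q" by (rule rw_prob)
  define P where "P N b = (\<integral>\<omega>. Sv N (int b - 1) \<omega> \<partial>rw_space q)" for N b
  have "(\<lambda>N. P N 1) \<longlonglongrightarrow> 0"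
  proof (rule surv_lemma[OF q])
    show "P 0 b = (if b = 0 then 0 else 1)" for b by (simp add: P_def Sv_0 prob_space)
    show "P N 0 = 0" for N by (simp add: P_def)
    show "P (Suc N) (Suc b) = q * P N (Suc (Suc b)) + (1 - q) * P N b" for N b
    proof -
      have "P (Suc N) (Suc b) = (\<integral>\<omega>. Sv (Suc N) (int b) \<omega> \<partial>rw_space q)" by (simp add: P_def)
      also have "\<dots> = q * (\<integral>\<omega>. Sv N (int b + 1) \<omega> \<partial>rw_space q)
        + (1 - q) * (\<integral>\<omega>. Sv N (int b - 1) \<omega> \<partial>rw_space q)"
        by (rule Sv_int_rec) (use q in auto)
      also have "\<dots> = q * P N (Suc (Suc b)) + (1 - q) * P N b"
        by (simp add: P_def add.commute)
      finally show ?thesis .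
    qed
  qed
  then show ?thesis by (simp add: P_def)
qed

lemma AE_hit:
  assumes q: "0 \<le> q" "q < 1 - q"
  shows "AE \<omega> in rw_space q. \<exists>i. walk \<omega> i = -1"
proof -
  interpret prob_space "rw_space q" by (rule rw_prob)
  define A where "A = {\<omega> \<in> space (rw_space q). \<forall>i. walk \<omega> i \<noteq> -1}"
  have A[measurable]: "A \<in> sets (rw_space q)" unfolding A_def by measurable
  have le: "measure (rw_space q) A \<le> (\<integral>\<omega>. Sv N 0 \<omega> \<partial>rw_space q)" for N
  proof -
    have "measure (rw_space q) A = (\<integral>\<omega>. indicator A \<omega> \<partial>rw_space q)" by simp
    also have "\<dots> \<le> (\<integral>\<omega>. Sv N 0 \<omega> \<partial>rw_space q)"
    proof (rule integral_mono)
      show "integrable (rw_space q) (Sv N 0)"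
        by (rule bounded_integrable[where B=1]) (auto simp: Sv_bounds)
      show "integrable (rw_space q) (\<lambda>\<omega>. indicator A \<omega> :: real)"
        by (rule integrable_real_indicator) (auto simp: emeasure_eq_measure)
      show "indicator A \<omega> \<le> Sv N 0 \<omega>" for \<omega>
        by (auto simp: indicator_def A_def Sv_def Sv_bounds)
    qed
    finally show ?thesis .
  qed
  have "measure (rw_space q) A \<le> 0"
    by (rule LIMSEQ_le_const[OF Sv_lim[OF q]]) (use le in blast)
  then have "measure (rw_space q) A = 0" by (simp add: measure_nonneg antisym)
  then have "A \<in> null_sets (rw_space q)" by (simp add: emeasure_eq_measure null_sets_def)
  then show ?thesis by (rule AE_I') (auto simp: A_def)
qed



lemma Sn_mono: "Sn L N a \<omega> \<le> Sn L (Suc N) a \<omega>"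
  unfolding Sn_def by (simp add: sum.atLeast_Suc_atMost_Suc_shift[symmetric] del: sum.atLeast_Suc_atMost_Suc_shift)

lemma hit_facts:
  assumes "\<exists>i. walk \<omega> i = -1"
  shows "walk \<omega> (hit_time \<omega>) = -1" "\<And>k. k < hit_time \<omega> \<Longrightarrow> walk \<omega> k \<noteq> -1"
proof -
  have T: "hit_time \<omega> = (LEAST i. walk \<omega> i = -1)" using assms by (simp add: hit_time_def)
  show "walk \<omega> (hit_time \<omega>) = -1" unfolding T by (rule LeastI_ex[OF assms])
  show "\<And>k. k < hit_time \<omega> \<Longrightarrow> walk \<omega> k \<noteq> -1" unfolding T by (rule not_less_Least)
qed

lemma walk_down: "1 \<le> i \<Longrightarrow> (walk \<omega> i < walk \<omega> (i - 1)) = (\<not> \<omega> (i - 1))"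
  by (cases i) (auto simp: walk_Suc)

lemma walk_ivt: "walk \<omega> i < -1 \<Longrightarrow> \<exists>k<i. walk \<omega> k = -1"
proof (induction i)
  case 0 then show ?case by simp
next
  case (Suc i)
  show ?case
  proof (cases "walk \<omega> i = -1")
    case True then show ?thesis by auto
  next
    case False
    then have "walk \<omega> i < -1" using Suc.prems by (simp add: walk_Suc split: if_splits)
    then show ?thesis using Suc.IH less_Suc_eq by blast
  qed
qed

lemma walk_ge_before_hit:
  assumes "\<exists>i. walk \<omega> i = -1" "i \<le> hit_time \<omega>"
  shows "-1 \<le> walk \<omega> i"
proof (rule ccontr)
  assume "\<not> -1 \<le> walk \<omega> i"
  then obtain k where "k < i" "walk \<omega> k = -1" using walk_ivt by (meson not_le)
  then show False using hit_facts(2)[OF assms(1), of k] assms(2) by simp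
qed

lemma Sn_eq_u:
  assumes h: "\<exists>i. walk \<omega> i = -1" and N: "hit_time \<omega> \<le> N"
  shows "Sn (int n) N 0 \<omega> = u_fun n \<omega>"
proof -
  let ?T = "hit_time \<omega>"
  let ?h = "\<lambda>i. if \<not> \<omega> (i - 1) \<and> walk \<omega> i < int n then 1 else (0::real)"
  have "Sn (int n) N 0 \<omega> = (\<Sum>i\<in>{1..N}. if i \<in> {..?T} then ?h i else 0)"
    unfolding Sn_def
  proof (rule sum.cong[OF refl])
    fix i assume i: "i \<in> {1..N}"
    show "(if (\<forall>k<i. 0 + walk \<omega> k \<noteq> -1) \<and> \<not> \<omega> (i - 1) \<and> 0 + walk \<omega> i < int n then 1 else 0)
      = (if i \<in> {..?T} then ?h i else 0)"
    proof (cases "i \<le> ?T")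
      case True
      then have "\<forall>k<i. walk \<omega> k \<noteq> -1" using hit_facts(2)[OF h] by auto
      then show ?thesis using True by simp
    next
      case False
      then have "\<not> (\<forall>k<i. walk \<omega> k \<noteq> -1)" using hit_facts(1)[OF h] by (auto intro!: exI[of _ ?T])
      then show ?thesis using False by simp
    qed
  qed
  also have "\<dots> = (\<Sum>i\<in>{1..N} \<inter> {..?T}. ?h i)" by (rule sum.inter_restrict[symmetric]) simp
  also have "{1..N} \<inter> {..?T} = {1..?T}" using N by auto
  also have "(\<Sum>i\<in>{1..?T}. ?h i) = u_fun n \<omega>"
    unfolding u_fun_def
  proof (rule sum.cong[OF refl])
    fix i assume "i \<in> {1..?T}"
    then have "1 \<le> i" by simp
    then show "?h i = (if walk \<omega> i < int n \<and> walk \<omega> i < walk \<omega> (i - 1) then 1 else 0)"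
      using walk_down[of i \<omega>] by auto
  qed
  finally show ?thesis .
qed

lemma u_result:
  assumes q: "0 \<le> q" "q < 1 - q"
  shows "integrable (rw_space q) (u_fun n)" "(\<integral>\<omega>. u_fun n \<omega> \<partial>rw_space q) = Cf q n 1"
proof -
  have lim: "AE \<omega> in rw_space q. (\<lambda>N. Sn (int n) N 0 \<omega>) \<longlonglongrightarrow> u_fun n \<omega>"
    using AE_hit[OF q]
  proof (rule AE_mp, intro AE_I2 impI)
    fix \<omega> assume h: "\<exists>i. walk \<omega> i = -1"
    show "(\<lambda>N. Sn (int n) N 0 \<omega>) \<longlonglongrightarrow> u_fun n \<omega>"
      by (rule tendsto_eventually) (use Sn_eq_u[OF h] in \<open>auto simp: eventually_sequentially\<close>)
  qed
  have i: "integrable (rw_space q) (Sn (int n) N 0)" for N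
    by (rule bounded_integrable[where B="real N"]) (auto simp: Sn_nonneg Sn_le)
  have mono: "AE \<omega> in rw_space q. mono (\<lambda>N. Sn (int n) N 0 \<omega>)"
    by (intro AE_I2) (simp add: mono_iff_le_Suc Sn_mono)
  have pos: "AE \<omega> in rw_space q. 0 \<le> Sn (int n) N 0 \<omega>" for N
    by (intro AE_I2) (simp add: Sn_nonneg)
  show "integrable (rw_space q) (u_fun n)"
    by (rule integral_monotone_convergence_nonneg(1)[OF i mono pos lim Sn_lim[OF q]]) simp
  show "(\<integral>\<omega>. u_fun n \<omega> \<partial>rw_space q) = Cf q n 1"
    by (rule integral_monotone_convergence_nonneg(2)[OF i mono pos lim Sn_lim[OF q]]) simp
qed

lemma count_lemma:
  fixes j :: int assumes "-1 \<le> j"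
  shows "(\<Sum>m<n. if j < int m then 1 else 0 :: real) = (if j < int n then real n - real_of_int j - 1 else 0)"
proof (induction n)
  case 0 then show ?case using assms by simp
next
  case (Suc n)
  then show ?case using assms by auto
qed

lemma v_identity:
  "v_fun n \<omega> = (real n - 1) * u_fun n \<omega> - (\<Sum>m<n. u_fun m \<omega>)"
proof (cases "\<exists>i. walk \<omega> i = -1")
  case False
  then have "hit_time \<omega> = 0" by (simp add: hit_time_def)
  then show ?thesis by (simp add: u_fun_def v_fun_def)
next
  case True
  let ?I = "{1..hit_time \<omega>}"
  let ?f = "\<lambda>m i. if walk \<omega> i < int m \<and> walk \<omega> i < walk \<omega> (i - 1) then 1 else (0::real)"
  have "(real n - 1) * u_fun n \<omega> - (\<Sum>m<n. u_fun m \<omega>)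
      = (\<Sum>i\<in>?I. (real n - 1) * ?f n i) - (\<Sum>i\<in>?I. \<Sum>m<n. ?f m i)"
    unfolding u_fun_def by (simp add: sum_distrib_left sum.swap[of _ "{..<n}"])
  also have "\<dots> = (\<Sum>i\<in>?I. (real n - 1) * ?f n i - (\<Sum>m<n. ?f m i))"
    by (simp add: sum_subtractf)
  also have "\<dots> = v_fun n \<omega>"
    unfolding v_fun_def
  proof (rule sum.cong[OF refl])
    fix i assume "i \<in> ?I"
    then have ge: "-1 \<le> walk \<omega> i" using walk_ge_before_hit[OF True] by simp
    show "(real n - 1) * ?f n i - (\<Sum>m<n. ?f m i) =
      (if walk \<omega> i < int n \<and> walk \<omega> i < walk \<omega> (i - 1) then real_of_int (walk \<omega> i) else 0)"
    proof (cases "walk \<omega> i < walk \<omega> (i - 1)")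
      case False then show ?thesis by simp
    next
      case D: True
      have "(\<Sum>m<n. ?f m i) = (\<Sum>m<n. if walk \<omega> i < int m then 1 else 0)" using D by simp
      also have "\<dots> = (if walk \<omega> i < int n then real n - real_of_int (walk \<omega> i) - 1 else 0)"
        by (rule count_lemma[OF ge])
      finally show ?thesis using D by simp
    qed
  qed
  finally show ?thesis ..
qed



lemma v_alg:
  fixes p q :: real assumes "0 \<le> q" "p + q = 1" "q < p"
  shows "(real n - 1) * (p / (p - q) * (1 - (q / p) ^ (n + 1))) - (\<Sum>m<n. p / (p - q) * (1 - (q / p) ^ (m + 1)))
    = p / (p - q)^2 * (2 * q - p - (q + real n * (p - q)) * (q / p) ^ (n + 1))"
proof -
  define d where "d = p - q"
  define r where "r = q / p"
  define c where "c = p / d^2"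
  have d: "d > 0" using assms by (simp add: d_def)
  have pp: "p > 0" using assms by simp
  have pr: "p * r = q" using pp by (simp add: r_def)
  have e: "p / (p - q) = c * d" using d by (simp add: c_def d_def[symmetric] power2_eq_square)
  have e2: "p / (p - q)^2 = c" by (simp add: c_def d_def)
  have main: "(real n - 1) * (c * d * (1 - r ^ (n + 1))) - (\<Sum>m<n. c * d * (1 - r ^ (m + 1)))
    = c * (2 * q - p - (q + real n * d) * r ^ (n + 1))"
  proof (induction n)
    case 0
    have "-(c*d*(1-r)) - c*(2*q-p-q*r) = c*(p*r - q) + c*(r-1)*(d-(p-q))" by (simp add: algebra_simps)
    then show ?case using pr by (simp add: d_def)
  next
    case (Suc n)
    define X where "X = r ^ (n + 1)"
    have "(real (Suc n) - 1) * (c * d * (1 - r ^ (Suc n + 1))) - (\<Sum>m<Suc n. c * d * (1 - r ^ (m + 1)))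
      = ((real n - 1) * (c * d * (1 - r ^ (n + 1))) - (\<Sum>m<n. c * d * (1 - r ^ (m + 1))))
        + real n * (c * d * (1 - r * X) - c * d * (1 - X))"
      by (simp add: X_def algebra_simps)
    also have "\<dots> = c * (2 * q - p - (q + real n * d) * X) + real n * (c * d * (1 - r * X) - c * d * (1 - X))"
      using Suc by (simp add: X_def)
    also have "\<dots> = c * (2 * q - p - (q + real (Suc n) * d) * (r * X)) + (c*X*(p*r - q) + c*X*r*(d - (p - q)))"
      by (simp add: algebra_simps)
    also have "\<dots> = c * (2 * q - p - (q + real (Suc n) * d) * r ^ (Suc n + 1))"
      using pr by (simp add: d_def X_def)
    finally show ?case .
  qed
  show ?thesis unfolding e e2 using main by (simp add: d_def r_def)
qed

theorem lemma7:
  fixes p q :: real and n :: nat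
  assumes "0 \<le> q" and "p + q = 1" and "q < p"
  shows "integrable (rw_space q) (u_fun n) \<and>
         (\<integral>\<omega>. u_fun n \<omega> \<partial>rw_space q) = p / (p - q) * (1 - (q / p) ^ (n + 1)) \<and>
         integrable (rw_space q) (v_fun n) \<and>
         (\<integral>\<omega>. v_fun n \<omega> \<partial>rw_space q) =
           p / (p - q)^2 * (2 * q - p - (q + real n * (p - q)) * (q / p) ^ (n + 1))"
proof -
  have p: "p = 1 - q" using assms by simp
  have q: "0 \<le> q" "q < 1 - q" using assms by auto
  have ui: "integrable (rw_space q) (u_fun m)" for m by (rule u_result(1)[OF q])
  have ue: "(\<integral>\<omega>. u_fun m \<omega> \<partial>rw_space q) = p / (p - q) * (1 - (q / p) ^ (m + 1))" for m
    unfolding u_result(2)[OF q] Cf1[OF q] p ..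
  have vf: "v_fun n = (\<lambda>\<omega>. (real n - 1) * u_fun n \<omega> - (\<Sum>m<n. u_fun m \<omega>))"
    by (rule ext) (rule v_identity)
  have vi: "integrable (rw_space q) (v_fun n)"
    unfolding vf by (intro Bochner_Integration.integrable_diff integrable_mult_right Bochner_Integration.integrable_sum ui)
  have "(\<integral>\<omega>. v_fun n \<omega> \<partial>rw_space q) = (real n - 1) * (\<integral>\<omega>. u_fun n \<omega> \<partial>rw_space q) - (\<Sum>m<n. \<integral>\<omega>. u_fun m \<omega> \<partial>rw_space q)"
    unfolding vf
    by (subst Bochner_Integration.integral_diff)
       (auto intro!: integrable_mult_right Bochner_Integration.integrable_sum ui
             simp: Bochner_Integration.integral_sum[OF ui])
  also have "\<dots> = p / (p - q)^2 * (2 * q - p - (q + real n * (p - q)) * (q / p) ^ (n + 1))"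
    unfolding ue by (rule v_alg[OF assms])
  finally show ?thesis using ui ue vi by simp
qed


end
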